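(* Let $\beta$ be a basis set of monomials in $x_1,\dots,x_r$, let $c^{\mathbf d}_{\mathbf j}$ be an arbitrary arrow for $\beta$, and let $\mathbf x^{\mathbf b}$ be a minimal generator of $I_\beta$ with $\mathbf x^{\mathbf b}\mid\mathbf x^{\mathbf d}$. Then either $c^{\mathbf d}_{\mathbf j}\sim0$ or $c^{\mathbf d}_{\mathbf j}\sim c^{\mathbf b}_{\mathbf j_1}$ for some $\mathbf x^{\mathbf j_1}\in\beta$.
   Context: Monomials are identified with exponent vectors in $\mathbb Z_{\ge0}^r$. A basis set is a finite nonempty set $\beta$ of monomials closed under taking divisors; $I_\beta$ is the ideal generated by monomials not in $\beta$. An arrow $c^{\mathbf d}_{\mathbf j}$ for $\beta$ is a pair $(\mathbf d,\mathbf j)$ with tail $\mathbf x^{\mathbf d}\notin\beta$ and head $\mathbf x^{\mathbf j}\in\beta$. A translation step replaces $(\mathbf d,\mathbf j)$ by $(\mathbf d\pm e_i,\mathbf j\pm e_i)$ provided the result is again an arrow (nonnegative exponents, head in $\beta$, tail not in $\beta$); $\sim$ is the equivalence relation generated by steps. $c\sim0$ means $c$ is translation-equivalent to an arrow $(\mathbf d',\mathbf j')$ with, for some $i$, $j'_i=0$, $d'_i\ge1$ and $\mathbf x^{\mathbf d'-e_i}\notin\beta$. *)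

theory Defs
  imports Main
begin

text \<open>Monomials in variables indexed by a finite type 'i (r = CARD('i)) are
exponent vectors 'i \<Rightarrow> nat.\<close>

type_synonym 'i monomial = "'i \<Rightarrow> nat"

definition mdvd :: "'i monomial \<Rightarrow> 'i monomial \<Rightarrow> bool" where
  "mdvd a b \<longleftrightarrow> (\<forall>i. a i \<le> b i)"

definition basis_set :: "('i::finite) monomial set \<Rightarrow> bool" where
  "basis_set \<beta> \<longleftrightarrow> finite \<beta> \<and> \<beta> \<noteq> {} \<and> (\<forall>m\<in>\<beta>. \<forall>m'. mdvd m' m \<longrightarrow> m' \<in> \<beta>)"

definition in_I :: "'i monomial set \<Rightarrow> 'i monomial \<Rightarrow> bool" where
  "in_I \<beta> m \<longleftrightarrow> (\<exists>g. g \<notin> \<beta> \<and> mdvd g m)"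

definition min_gen :: "'i monomial set \<Rightarrow> 'i monomial \<Rightarrow> bool" where
  "min_gen \<beta> b \<longleftrightarrow> in_I \<beta> b \<and> (\<forall>m. in_I \<beta> m \<and> mdvd m b \<longrightarrow> m = b)"

definition is_arrow :: "'i monomial set \<Rightarrow> 'i monomial \<Rightarrow> 'i monomial \<Rightarrow> bool" where
  "is_arrow \<beta> d j \<longleftrightarrow> d \<notin> \<beta> \<and> j \<in> \<beta>"

definition tstep :: "'i monomial set \<Rightarrow> ('i monomial \<times> 'i monomial) \<Rightarrow> ('i monomial \<times> 'i monomial) \<Rightarrow> bool" where
  "tstep \<beta> c c' \<longleftrightarrow> is_arrow \<beta> (fst c) (snd c) \<and> is_arrow \<beta> (fst c') (snd c') \<and>
     (\<exists>i. (fst c' = (fst c)(i := fst c i + 1) \<and> snd c' = (snd c)(i := snd c i + 1))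
        \<or> (fst c i \<ge> 1 \<and> snd c i \<ge> 1 \<and>
           fst c' = (fst c)(i := fst c i - 1) \<and> snd c' = (snd c)(i := snd c i - 1)))"

definition tequiv :: "'i monomial set \<Rightarrow> ('i monomial \<times> 'i monomial) \<Rightarrow> ('i monomial \<times> 'i monomial) \<Rightarrow> bool" where
  "tequiv \<beta> = equivclp (tstep \<beta>)"

definition sim0 :: "'i monomial set \<Rightarrow> ('i monomial \<times> 'i monomial) \<Rightarrow> bool" where
  "sim0 \<beta> c \<longleftrightarrow> (\<exists>d' j' i. tequiv \<beta> c (d', j') \<and> is_arrow \<beta> d' j' \<and>
      j' i = 0 \<and> d' i \<ge> 1 \<and> (d'(i := d' i - 1)) \<notin> \<beta>)"

end

theory Submission
  imports Defs
begin

lemma notin_beta: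
  assumes "basis_set \<beta>" "b \<notin> \<beta>" "mdvd b m"
  shows "m \<notin> \<beta>"
  using assms unfolding basis_set_def by blast

lemma main_ind:
  fixes \<beta> :: "('i::finite) monomial set" and b :: "'i monomial"
  assumes bs: "basis_set \<beta>" and bn: "b \<notin> \<beta>"
  shows "(\<Sum>i\<in>UNIV. d i - b i) = n \<Longrightarrow> mdvd b d \<Longrightarrow> is_arrow \<beta> d j \<Longrightarrow>
     sim0 \<beta> (d, j) \<or> (\<exists>j1 \<in> \<beta>. tequiv \<beta> (d, j) (b, j1))"
proof (induction n arbitrary: d j)
  case 0
  have "\<forall>i. d i - b i = 0" using 0(1) by simp
  with 0(2) have "d = b" unfolding mdvd_def by (auto intro!: ext simp: le_antisym)
  then show ?case using 0(3) unfolding is_arrow_def tequiv_def by (meson equivclp_refl)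
next
  case (Suc n)
  obtain i where di: "d i > b i"
  proof (rule ccontr)
    assume "\<not> thesis"
    with that have "\<forall>i. d i - b i = 0" by (metis diff_is_0_eq not_less)
    with Suc(2) show False by simp
  qed
  define d' where "d' = d(i := d i - 1)"
  have bd': "mdvd b d'" using Suc(3) di unfolding mdvd_def d'_def by auto
  have d'n: "d' \<notin> \<beta>" using notin_beta[OF bs bn bd'] .
  show ?case
  proof (cases "j i = 0")
    case True
    have "sim0 \<beta> (d, j)" unfolding sim0_def
      apply (rule exI[of _ d], rule exI[of _ j], rule exI[of _ i])
      using True di d'n Suc(4) unfolding tequiv_def d'_def by auto
    then show ?thesis by blast
  next
    case False
    define j' where "j' = j(i := j i - 1)"
    have "mdvd j' j" unfolding mdvd_def j'_def by auto
    then have j'b: "j' \<in> \<beta>" using bs Suc(4) unfolding basis_set_def is_arrow_def by blast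
    have ar: "is_arrow \<beta> d' j'" using d'n j'b unfolding is_arrow_def by simp
    have st: "tstep \<beta> (d, j) (d', j')" unfolding tstep_def
      using Suc(4) ar di False unfolding d'_def j'_def
      by (intro conjI exI[of _ i] disjI2) auto
    have sum: "(\<Sum>k\<in>UNIV. d k - b k) = (\<Sum>k\<in>UNIV. d' k - b k) + 1"
    proof -
      have "(\<Sum>k\<in>UNIV. d k - b k) = (d i - b i) + (\<Sum>k\<in>UNIV-{i}. d k - b k)"
        by (simp add: sum.remove)
      moreover have "(\<Sum>k\<in>UNIV. d' k - b k) = (d' i - b i) + (\<Sum>k\<in>UNIV-{i}. d' k - b k)"
        by (simp add: sum.remove)
      moreover have "(\<Sum>k\<in>UNIV-{i}. d' k - b k) = (\<Sum>k\<in>UNIV-{i}. d k - b k)"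
        by (rule sum.cong) (auto simp: d'_def)
      moreover have "d' i - b i + 1 = d i - b i" using di by (simp add: d'_def)
      ultimately show ?thesis by simp
    qed
    have IH: "sim0 \<beta> (d', j') \<or> (\<exists>j1 \<in> \<beta>. tequiv \<beta> (d', j') (b, j1))"
      using Suc.IH[OF _ bd' ar] Suc(2) sum by simp
    have eq: "tequiv \<beta> (d, j) (d', j')" unfolding tequiv_def using st by auto
    have tr: "\<And>x. tequiv \<beta> (d', j') x \<Longrightarrow> tequiv \<beta> (d, j) x"
      using eq unfolding tequiv_def by (meson equivclp_trans)
    from IH show ?thesis
    proof
      assume "sim0 \<beta> (d', j')"
      then show ?thesis unfolding sim0_def using tr by blast
    next
      assume "\<exists>j1 \<in> \<beta>. tequiv \<beta> (d', j') (b, j1)"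
      then show ?thesis using tr by blast
    qed
  qed
qed

theorem lemma4p2:
  fixes \<beta> :: "('i::finite) monomial set" and d j b :: "'i monomial"
  assumes "basis_set \<beta>"
    and "is_arrow \<beta> d j"
    and "min_gen \<beta> b"
    and "mdvd b d"
  shows "sim0 \<beta> (d, j) \<or> (\<exists>j1 \<in> \<beta>. tequiv \<beta> (d, j) (b, j1))"
proof -
  obtain g where g: "g \<notin> \<beta>" "mdvd g b" using assms(3) unfolding min_gen_def in_I_def by blast
  have bn: "b \<notin> \<beta>" using notin_beta[OF assms(1) g] .
  show ?thesis using main_ind[OF assms(1) bn refl assms(4) assms(2)] .
qed

end
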